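(* There is an algorithm which, given a skew-merged permutation of size $n$, computes in $O(n)$ time the type (NE, NW, SW, SE, or central) of each of its elements.
   Context: Permutations are identified with their sets of points $(i,\sigma(i))$ with the usual left/right/above/below relations. A permutation is skew-merged if its points can be partitioned into an increasing and a decreasing subsequence (equivalently, it avoids $3412$ and $2143$). An element of a skew-merged permutation is of type NE if it plays the role of the $3$ in an occurrence of $213$; NW if it plays the $3$ in an occurrence of $312$; SW if it plays the $1$ in an occurrence of $132$; SE if it plays the $1$ in an occurrence of $231$; it is central if it has none of these types. (The four non-central types are pairwise disjoint.) *)

theory Defs
  imports "HOL-Combinatorics.Permutations"
begin

text \<open>A permutation of size n is a bijection sigma of {1..n}; its elements are the
points (i, sigma i), identified by their position i.\<close>

definition skew_merged :: "nat \<Rightarrow> (nat \<Rightarrow> nat) \<Rightarrow> bool" where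
  "skew_merged n \<sigma> \<longleftrightarrow>
     (\<exists>A \<subseteq> {1..n}.
        (\<forall>i\<in>A. \<forall>j\<in>A. i < j \<longrightarrow> \<sigma> i < \<sigma> j) \<and>
        (\<forall>i\<in>{1..n} - A. \<forall>j\<in>{1..n} - A. i < j \<longrightarrow> \<sigma> i > \<sigma> j))"

text \<open>NE: the 3 of a 213;  NW: the 3 of a 312;  SW: the 1 of a 132;  SE: the 1 of a 231.\<close>

definition is_NE :: "nat \<Rightarrow> (nat \<Rightarrow> nat) \<Rightarrow> nat \<Rightarrow> bool" where
  "is_NE n \<sigma> c \<longleftrightarrow> (\<exists>a\<in>{1..n}. \<exists>b\<in>{1..n}. a < b \<and> b < c \<and> \<sigma> b < \<sigma> a \<and> \<sigma> a < \<sigma> c)"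

definition is_NW :: "nat \<Rightarrow> (nat \<Rightarrow> nat) \<Rightarrow> nat \<Rightarrow> bool" where
  "is_NW n \<sigma> a \<longleftrightarrow> (\<exists>b\<in>{1..n}. \<exists>c\<in>{1..n}. a < b \<and> b < c \<and> \<sigma> b < \<sigma> c \<and> \<sigma> c < \<sigma> a)"

definition is_SW :: "nat \<Rightarrow> (nat \<Rightarrow> nat) \<Rightarrow> nat \<Rightarrow> bool" where
  "is_SW n \<sigma> a \<longleftrightarrow> (\<exists>b\<in>{1..n}. \<exists>c\<in>{1..n}. a < b \<and> b < c \<and> \<sigma> a < \<sigma> c \<and> \<sigma> c < \<sigma> b)"

definition is_SE :: "nat \<Rightarrow> (nat \<Rightarrow> nat) \<Rightarrow> nat \<Rightarrow> bool" where
  "is_SE n \<sigma> c \<longleftrightarrow> (\<exists>a\<in>{1..n}. \<exists>b\<in>{1..n}. a < b \<and> b < c \<and> \<sigma> c < \<sigma> a \<and> \<sigma> a < \<sigma> b)"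

datatype etype = NE | NW | SW | SE | Central

text \<open>The four non-central types are pairwise disjoint (for skew-merged permutations),
so this if-chain returns the unique type.\<close>
definition elem_type :: "nat \<Rightarrow> (nat \<Rightarrow> nat) \<Rightarrow> nat \<Rightarrow> etype" where
  "elem_type n \<sigma> i =
     (if is_NE n \<sigma> i then NE else if is_NW n \<sigma> i then NW else if is_SW n \<sigma> i then SW
      else if is_SE n \<sigma> i then SE else Central)"

fun etype_code :: "etype \<Rightarrow> int" where
  "etype_code Central = 0" | "etype_code NE = 1" | "etype_code NW = 2"
| "etype_code SW = 3" | "etype_code SE = 4"

text \<open>Each executed command costs one time unit
(expressions are of program-bounded size, so this is unit cost up to a constant).\<close>

type_synonym vname = string
type_synonym state = "(vname \<Rightarrow> int) \<times> (vname \<Rightarrow> int \<Rightarrow> int)"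

datatype aexp = N int | V vname | Plus aexp aexp | Minus aexp aexp | Get vname aexp

datatype bexp = Less aexp aexp | Eq aexp aexp | Not bexp | And bexp bexp

datatype com = Skip | Assign vname aexp | ASet vname aexp aexp | Seq com com
  | If bexp com com | While bexp com

fun aval :: "aexp \<Rightarrow> state \<Rightarrow> int" where
  "aval (N k) s = k"
| "aval (V x) s = fst s x"
| "aval (Plus a b) s = aval a s + aval b s"
| "aval (Minus a b) s = aval a s - aval b s"
| "aval (Get x a) s = snd s x (aval a s)"

fun bval :: "bexp \<Rightarrow> state \<Rightarrow> bool" where
  "bval (Less a b) s = (aval a s < aval b s)"
| "bval (Eq a b) s = (aval a s = aval b s)"
| "bval (Not b) s = (\<not> bval b s)"
| "bval (And b1 b2) s = (bval b1 s \<and> bval b2 s)"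

inductive exec :: "com \<Rightarrow> state \<Rightarrow> nat \<Rightarrow> state \<Rightarrow> bool" where
  Skip: "exec Skip s 1 s"
| Assign: "exec (Assign x a) s 1 ((fst s)(x := aval a s), snd s)"
| ASet: "exec (ASet x i a) s 1 (fst s, (snd s)(x := (snd s x)(aval i s := aval a s)))"
| Seq: "exec c1 s t1 s1 \<Longrightarrow> exec c2 s1 t2 s2 \<Longrightarrow> exec (Seq c1 c2) s (t1 + t2 + 1) s2"
| IfT: "bval b s \<Longrightarrow> exec c1 s t s' \<Longrightarrow> exec (If b c1 c2) s (t + 1) s'"
| IfF: "\<not> bval b s \<Longrightarrow> exec c2 s t s' \<Longrightarrow> exec (If b c1 c2) s (t + 1) s'"
| WhileF: "\<not> bval b s \<Longrightarrow> exec (While b c) s 1 s"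
| WhileT: "bval b s \<Longrightarrow> exec c s t1 s1 \<Longrightarrow> exec (While b c) s1 t2 s2 \<Longrightarrow>
           exec (While b c) s (t1 + t2 + 1) s2"

definition input_ok :: "nat \<Rightarrow> (nat \<Rightarrow> nat) \<Rightarrow> state \<Rightarrow> bool" where
  "input_ok n \<sigma> s \<longleftrightarrow> fst s ''n'' = int n \<and> (\<forall>i\<in>{1..n}. snd s ''in'' (int i) = int (\<sigma> i))"

definition output_ok :: "nat \<Rightarrow> (nat \<Rightarrow> nat) \<Rightarrow> state \<Rightarrow> bool" where
  "output_ok n \<sigma> s \<longleftrightarrow> (\<forall>i\<in>{1..n}. snd s ''out'' (int i) = etype_code (elem_type n \<sigma> i))"

end

theory Submission
  imports Defs
begin



fun lf :: "com \<Rightarrow> state \<Rightarrow> nat \<times> state" where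
  "lf Skip s = (1, s)"
| "lf (Assign x a) s = (1, ((fst s)(x := aval a s), snd s))"
| "lf (ASet x i a) s = (1, (fst s, (snd s)(x := (snd s x)(aval i s := aval a s))))"
| "lf (Seq c1 c2) s = (let r1 = lf c1 s; r2 = lf c2 (snd r1) in (fst r1 + fst r2 + 1, snd r2))"
| "lf (If b c1 c2) s = (if bval b s then (let r = lf c1 s in (fst r + 1, snd r)) else (let r = lf c2 s in (fst r + 1, snd r)))"
| "lf (While b c) s = (0, s)"

fun loopfree :: "com \<Rightarrow> bool" where
  "loopfree (Seq c1 c2) = (loopfree c1 \<and> loopfree c2)"
| "loopfree (If b c1 c2) = (loopfree c1 \<and> loopfree c2)"
| "loopfree (While b c) = False"
| "loopfree _ = True"

lemma lf_exec: "loopfree c \<Longrightarrow> exec c s (fst (lf c s)) (snd (lf c s))"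
proof (induction c arbitrary: s)
  case (Seq c1 c2)
  then have "exec c1 s (fst (lf c1 s)) (snd (lf c1 s))" "exec c2 (snd (lf c1 s)) (fst (lf c2 (snd (lf c1 s)))) (snd (lf c2 (snd (lf c1 s))))" by auto
  from exec.Seq[OF this] show ?case by (simp add: Let_def)
next
  case (If b c1 c2)
  show ?case
  proof (cases "bval b s")
    case True
    have "exec c1 s (fst (lf c1 s)) (snd (lf c1 s))" using If by auto
    from exec.IfT[OF True this, of c2] show ?thesis using True by (simp add: Let_def)
  next
    case False
    have "exec c2 s (fst (lf c2 s)) (snd (lf c2 s))" using If by auto
    from exec.IfF[OF False this, of c1] show ?thesis using False by (simp add: Let_def)
  qed
qed (simp_all add: exec.Skip[simplified] exec.Assign[simplified] exec.ASet[simplified])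

lemma while_rule:
  assumes "I s0"
    and step: "\<And>s. I s \<Longrightarrow> bval b s \<Longrightarrow> \<exists>t s'. exec c s t s' \<and> t \<le> k \<and> I s' \<and> \<mu> s' < (\<mu> s :: nat)"
  shows "\<exists>t s'. exec (While b c) s0 t s' \<and> t \<le> (k+1) * \<mu> s0 + 1 \<and> I s' \<and> \<not> bval b s'"
  using assms(1)
proof (induction "\<mu> s0" arbitrary: s0 rule: less_induct)
  case less
  show ?case
  proof (cases "bval b s0")
    case False then have "exec (While b c) s0 1 s0" by (rule exec.WhileF)
    then show ?thesis using less.prems False by fastforce
  next
    case True
    then obtain t1 s1 where s1: "exec c s0 t1 s1" "t1 \<le> k" "I s1" "\<mu> s1 < \<mu> s0"
      using step less.prems by blast
    then obtain t2 s2 where s2: "exec (While b c) s1 t2 s2" "t2 \<le> (k+1) * \<mu> s1 + 1" "I s2" "\<not> bval b s2"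
      using less.hyps by blast
    have "exec (While b c) s0 (t1 + t2 + 1) s2" using True s1 s2 by (blast intro: exec.WhileT)
    moreover have "t1 + t2 + 1 \<le> (k+1) * \<mu> s0 + 1"
    proof -
      have "(k+1) * \<mu> s1 + (k+1) \<le> (k+1) * \<mu> s0" using s1(4)
        by (metis Suc_leI add.commute mult_Suc_right mult_le_mono2 Suc_eq_plus1)
      then show ?thesis using s1(2) s2(2) by linarith
    qed
    ultimately show ?thesis using s2 by blast
  qed
qed

lemma seq_rule: "exec c1 s t1 s1 \<Longrightarrow> exec c2 s1 t2 s2 \<Longrightarrow> exec (Seq c1 c2) s (t1+t2+1) s2"
  by (rule exec.Seq)




definition Lst :: "int set \<Rightarrow> int \<Rightarrow> (int \<Rightarrow> int) \<Rightarrow> (int \<Rightarrow> int) \<Rightarrow> bool" where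
  "Lst S hi Nf Pf \<longleftrightarrow> 0 \<in> S \<and> hi \<in> S \<and> S \<subseteq> {0..hi} \<and>
    (\<forall>v\<in>S. (v \<noteq> hi \<longrightarrow> Nf v \<in> S \<and> v < Nf v \<and> (\<forall>w\<in>S. v < w \<longrightarrow> Nf v \<le> w)) \<and>
            (v \<noteq> 0 \<longrightarrow> Pf v \<in> S \<and> Pf v < v \<and> (\<forall>w\<in>S. w < v \<longrightarrow> w \<le> Pf v)))"

lemma Lst_del:
  assumes L: "Lst S hi Nf Pf" and x: "x \<in> S" "0 < x" "x < hi"
  shows "Lst (S - {x}) hi (Nf(Pf x := Nf x)) (Pf(Nf x := Pf x))"
proof -
  have x0: "x \<noteq> 0" "x \<noteq> hi" using x by auto
  have Nx: "Nf x \<in> S" "x < Nf x" "\<forall>w\<in>S. x < w \<longrightarrow> Nf x \<le> w" using L x0 x unfolding Lst_def by blast+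
  have Px: "Pf x \<in> S" "Pf x < x" "\<forall>w\<in>S. w < x \<longrightarrow> w \<le> Pf x" using L x0 x unfolding Lst_def by blast+
  have base: "0 \<in> S" "hi \<in> S" "S \<subseteq> {0..hi}" using L unfolding Lst_def by auto
  have Nall: "\<And>v. v \<in> S \<Longrightarrow> v \<noteq> hi \<Longrightarrow> Nf v \<in> S \<and> v < Nf v \<and> (\<forall>w\<in>S. v < w \<longrightarrow> Nf v \<le> w)"
    using L unfolding Lst_def by blast
  have Pall: "\<And>v. v \<in> S \<Longrightarrow> v \<noteq> 0 \<Longrightarrow> Pf v \<in> S \<and> Pf v < v \<and> (\<forall>w\<in>S. w < v \<longrightarrow> w \<le> Pf v)"
    using L unfolding Lst_def by blast
  show ?thesis unfolding Lst_def
  proof (intro conjI ballI impI)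
    show "0 \<in> S - {x}" "hi \<in> S - {x}" "S - {x} \<subseteq> {0..hi}" using base x by auto
  next
    fix v assume v: "v \<in> S - {x}" "v \<noteq> hi"
    show "(Nf(Pf x := Nf x)) v \<in> S - {x}"
    proof (cases "v = Pf x")
      case True then show ?thesis using Nx by auto
    next
      case False
      have "Nf v \<noteq> x"
      proof
        assume "Nf v = x"
        have "v < x" using Nall[of v] v `Nf v = x` by auto
        then have "v \<le> Pf x" using Px v by auto
        moreover have "Pf x < Nf v" using Px `Nf v = x` by auto
        moreover have "\<not> (v < Pf x)"
        proof
          assume "v < Pf x"
          then have "Nf v \<le> Pf x" using Nall[of v] v Px(1) by blast
          then show False using Px(2) `Nf v = x` by auto
        qed
        ultimately show False using False by auto
      qed
      then show ?thesis using False Nall[of v] v by auto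
    qed
    show "v < (Nf(Pf x := Nf x)) v"
      using Nall[of v] v Nx Px by (cases "v = Pf x") auto
    show "(Nf(Pf x := Nf x)) v \<le> w" if w: "w \<in> S - {x}" "v < w" for w
    proof (cases "v = Pf x")
      case True
      have "x < w"
      proof (rule ccontr)
        assume "\<not> x < w"
        then have "w < x" using w by auto
        then have "w \<le> Pf x" using Px(3) w by auto
        then show False using True w by auto
      qed
      then show ?thesis using Nx(3) w True by auto
    next
      case False
      then show ?thesis using Nall[of v] v w by auto
    qed
  next
    fix v assume v: "v \<in> S - {x}" "v \<noteq> 0"
    show "(Pf(Nf x := Pf x)) v \<in> S - {x}"
    proof (cases "v = Nf x")
      case True then show ?thesis using Px by auto
    next
      case False
      have "Pf v \<noteq> x"
      proof
        assume "Pf v = x"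
        have "x < v" using Pall[of v] v `Pf v = x` by auto
        then have "Nf x \<le> v" using Nx v by auto
        moreover have "\<not> (Nf x < v)"
        proof
          assume "Nf x < v"
          then have "Nf x \<le> Pf v" using Pall[of v] v Nx(1) by blast
          then show False using Nx(2) `Pf v = x` by auto
        qed
        ultimately show False using False by auto
      qed
      then show ?thesis using False Pall[of v] v by auto
    qed
    show "(Pf(Nf x := Pf x)) v < v"
      using Pall[of v] v Nx Px by (cases "v = Nf x") auto
    show "w \<le> (Pf(Nf x := Pf x)) v" if w: "w \<in> S - {x}" "w < v" for w
    proof (cases "v = Nf x")
      case True
      have "w < x"
      proof (rule ccontr)
        assume "\<not> w < x"
        then have "x < w" using w by auto
        then have "Nf x \<le> w" using Nx(3) w by auto
        then show False using True w by auto
      qed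
      then show ?thesis using Px(3) w True by auto
    next
      case False
      then show ?thesis using Pall[of v] v w by auto
    qed
  qed
qed




lemma while_lf:
  assumes "I s0" "loopfree c"
    and step: "\<And>s. I s \<Longrightarrow> bval b s \<Longrightarrow> fst (lf c s) \<le> k \<and> I (snd (lf c s)) \<and> \<mu> (snd (lf c s)) < (\<mu> s :: nat)"
  shows "\<exists>t s'. exec (While b c) s0 t s' \<and> t \<le> (k+1) * \<mu> s0 + 1 \<and> I s' \<and> \<not> bval b s'"
  using assms(1)
proof (rule while_rule)
  fix s assume "I s" "bval b s"
  then show "\<exists>t s'. exec c s t s' \<and> t \<le> k \<and> I s' \<and> \<mu> s' < \<mu> s"
    using step lf_exec[OF assms(2)] by blast
qed

definition initB :: com where
  "initB = While (Less (V ''v'') (Plus (V ''n'') (N 2)))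
     (Seq (ASet ''nx'' (V ''v'') (Plus (V ''v'') (N 1)))
     (Seq (ASet ''pv'' (V ''v'') (Minus (V ''v'') (N 1)))
          (Assign ''v'' (Plus (V ''v'') (N 1)))))"

definition initL :: com where
  "initL = Seq (Assign ''v'' (N 0)) initB"

lemma initL_ok:
  assumes "fst s ''n'' = int n"
  shows "\<exists>t s'. exec initL s t s' \<and> t \<le> 6 * n + 20 \<and> fst s' ''n'' = int n
    \<and> (\<forall>x. x \<notin> {''nx'',''pv''} \<longrightarrow> snd s' x = snd s x)
    \<and> (\<forall>w\<in>{0..int n+1}. snd s' ''nx'' w = w+1 \<and> snd s' ''pv'' w = w - 1)"
proof -
  define s1 where "s1 = ((fst s)(''v'' := 0), snd s)"
  have e1: "exec (Assign ''v'' (N 0)) s 1 s1" unfolding s1_def using exec.Assign[of "''v''" "N 0" s] by simp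
  define I where "I = (\<lambda>r::state. fst r ''n'' = int n \<and> 0 \<le> fst r ''v'' \<and> fst r ''v'' \<le> int n + 2
    \<and> (\<forall>x. x \<notin> {''nx'',''pv''} \<longrightarrow> snd r x = snd s x)
    \<and> (\<forall>w\<in>{0..<fst r ''v''}. snd r ''nx'' w = w+1 \<and> snd r ''pv'' w = w - 1))"
  define \<mu> where "\<mu> = (\<lambda>r::state. nat (int n + 2 - fst r ''v''))"
  have "\<exists>t s'. exec initB s1 t s' \<and> t \<le> (5+1) * \<mu> s1 + 1 \<and> I s' \<and> \<not> bval (Less (V ''v'') (Plus (V ''n'') (N 2))) s'"
    unfolding initB_def
  proof (rule while_lf)
    show "I s1" unfolding I_def s1_def using assms by auto
    show "loopfree (Seq (ASet ''nx'' (V ''v'') (Plus (V ''v'') (N 1)))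
     (Seq (ASet ''pv'' (V ''v'') (Minus (V ''v'') (N 1)))
          (Assign ''v'' (Plus (V ''v'') (N 1)))))" by simp
  next
    fix r assume I: "I r" and b: "bval (Less (V ''v'') (Plus (V ''n'') (N 2))) r"
    let ?c = "Seq (ASet ''nx'' (V ''v'') (Plus (V ''v'') (N 1)))
     (Seq (ASet ''pv'' (V ''v'') (Minus (V ''v'') (N 1)))
          (Assign ''v'' (Plus (V ''v'') (N 1))))"
    define v where "v = fst r ''v''"
    have ev: "snd (lf ?c r) = ((fst r)(''v'' := v + 1),
       (snd r)(''nx'' := (snd r ''nx'')(v := v + 1), ''pv'' := (snd r ''pv'')(v := v - 1)))"
      by (simp add: Let_def v_def)
    have tm: "fst (lf ?c r) \<le> 5" by (simp add: Let_def)
    have vb: "0 \<le> v" "v < int n + 2" "fst r ''n'' = int n" using I b unfolding I_def v_def by auto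
    have fr: "\<forall>x. x \<notin> {''nx'',''pv''} \<longrightarrow> snd r x = snd s x" using I unfolding I_def by blast
    have old: "\<forall>w\<in>{0..<v}. snd r ''nx'' w = w+1 \<and> snd r ''pv'' w = w - 1" using I unfolding I_def v_def by blast
    have "I (snd (lf ?c r))" unfolding ev I_def using vb fr old by auto
    moreover have "\<mu> (snd (lf ?c r)) < \<mu> r" unfolding ev \<mu>_def using vb v_def by auto
    ultimately show "fst (lf ?c r) \<le> 5 \<and> I (snd (lf ?c r)) \<and> \<mu> (snd (lf ?c r)) < \<mu> r" using tm by blast
  qed
  then obtain t s' where w: "exec initB s1 t s'" "t \<le> (5+1) * \<mu> s1 + 1" "I s'" "\<not> bval (Less (V ''v'') (Plus (V ''n'') (N 2))) s'"
    by blast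
  have "exec initL s (1 + t + 1) s'" unfolding initL_def using e1 w(1) by (rule exec.Seq)
  moreover have "\<mu> s1 = n + 2" unfolding \<mu>_def s1_def by auto
  then have "1 + t + 1 \<le> 6 * n + 20" using w(2) by auto
  moreover have "fst s' ''n'' = int n \<and> (\<forall>x. x \<notin> {''nx'',''pv''} \<longrightarrow> snd s' x = snd s x)
    \<and> (\<forall>w\<in>{0..int n+1}. snd s' ''nx'' w = w+1 \<and> snd s' ''pv'' w = w - 1)"
    using w(3,4) unfolding I_def by auto
  ultimately show ?thesis by (intro exI[of _ "1+t+1"] exI[of _ s']) blast
qed




definition Sset :: "nat \<Rightarrow> (nat \<Rightarrow> nat) \<Rightarrow> nat \<Rightarrow> int set" where
  "Sset n \<tau> C = {0, int n + 1} \<union> (\<lambda>i. int (\<tau> i)) ` {1..C}"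

definition Pm :: "nat \<Rightarrow> (nat \<Rightarrow> nat) \<Rightarrow> nat \<Rightarrow> int \<Rightarrow> bool" where
  "Pm n \<tau> b w \<longleftrightarrow> int (\<tau> b) < w \<and> w \<le> int n + 1 \<and>
     (\<forall>a\<in>{1..<b}. \<tau> b < \<tau> a \<longrightarrow> w \<le> int (\<tau> a)) \<and> (w = int n + 1 \<or> (\<exists>a\<in>{1..<b}. w = int (\<tau> a)))"

definition Pq :: "nat \<Rightarrow> (nat \<Rightarrow> nat) \<Rightarrow> nat \<Rightarrow> int \<Rightarrow> bool" where
  "Pq n \<tau> b w \<longleftrightarrow> w < int (\<tau> b) \<and> 0 \<le> w \<and>
     (\<forall>a\<in>{1..<b}. \<tau> a < \<tau> b \<longrightarrow> int (\<tau> a) \<le> w) \<and> (w = 0 \<or> (\<exists>a\<in>{1..<b}. w = int (\<tau> a)))"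

lemma bwd_math:
  assumes L: "Lst (Sset n \<tau> C) (int n + 1) Nf Pf" and C: "1 \<le> C" "C \<le> n"
    and inj: "inj_on \<tau> {1..n}" and rg: "\<tau> ` {1..n} \<subseteq> {1..n}"
  shows "Pm n \<tau> C (Nf (int (\<tau> C)))" "Pq n \<tau> C (Pf (int (\<tau> C)))"
    "Lst (Sset n \<tau> (C - 1)) (int n + 1) (Nf(Pf (int (\<tau> C)) := Nf (int (\<tau> C)))) (Pf(Nf (int (\<tau> C)) := Pf (int (\<tau> C))))"
proof -
  let ?x = "int (\<tau> C)"
  have tC: "\<tau> C \<in> {1..n}" using rg C by (meson atLeastAtMost_iff image_subset_iff)
  have xS: "?x \<in> Sset n \<tau> C" unfolding Sset_def using C by auto
  have x0: "0 < ?x" "?x < int n + 1" using tC by auto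
  have Nx: "Nf ?x \<in> Sset n \<tau> C" "?x < Nf ?x" "\<forall>w\<in>Sset n \<tau> C. ?x < w \<longrightarrow> Nf ?x \<le> w"
    using L xS x0 unfolding Lst_def by auto
  have Px: "Pf ?x \<in> Sset n \<tau> C" "Pf ?x < ?x" "\<forall>w\<in>Sset n \<tau> C. w < ?x \<longrightarrow> w \<le> Pf ?x"
    using L xS x0 unfolding Lst_def by auto
  have sub: "Sset n \<tau> C \<subseteq> {0..int n + 1}" using L unfolding Lst_def by auto
  show "Pm n \<tau> C (Nf ?x)" unfolding Pm_def
  proof (intro conjI ballI impI)
    show "?x < Nf ?x" by (fact Nx(2))
    show "Nf ?x \<le> int n + 1" using Nx(1) sub by auto
    fix a assume a: "a \<in> {1..<C}" "\<tau> C < \<tau> a"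
    then show "Nf ?x \<le> int (\<tau> a)" using Nx(3) unfolding Sset_def by auto
  next
    show "Nf ?x = int n + 1 \<or> (\<exists>a\<in>{1..<C}. Nf ?x = int (\<tau> a))"
    proof -
      have "Nf ?x \<noteq> 0" using Nx(2) x0 by auto
      then have "Nf ?x = int n + 1 \<or> (\<exists>a\<in>{1..C}. Nf ?x = int (\<tau> a))" using Nx(1) unfolding Sset_def by auto
      moreover have "Nf ?x \<noteq> ?x" using Nx(2) by auto
      ultimately show ?thesis by (metis atLeastAtMost_iff atLeastLessThan_iff le_neq_implies_less)
    qed
  qed
  show "Pq n \<tau> C (Pf ?x)" unfolding Pq_def
  proof (intro conjI ballI impI)
    show "Pf ?x < ?x" by (fact Px(2))
    show "0 \<le> Pf ?x" using Px(1) sub by auto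
    fix a assume a: "a \<in> {1..<C}" "\<tau> a < \<tau> C"
    then show "int (\<tau> a) \<le> Pf ?x" using Px(3) unfolding Sset_def by auto
  next
    show "Pf ?x = 0 \<or> (\<exists>a\<in>{1..<C}. Pf ?x = int (\<tau> a))"
    proof -
      have "Pf ?x \<noteq> int n + 1" using Px(2) x0 by auto
      then have "Pf ?x = 0 \<or> (\<exists>a\<in>{1..C}. Pf ?x = int (\<tau> a))" using Px(1) unfolding Sset_def by auto
      moreover have "Pf ?x \<noteq> ?x" using Px(2) by auto
      ultimately show ?thesis by (metis atLeastAtMost_iff atLeastLessThan_iff le_neq_implies_less)
    qed
  qed
  have "Sset n \<tau> (C - 1) = Sset n \<tau> C - {?x}"
  proof -
    have "{1..C} = insert C {1..C-1}" using C by auto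
    moreover have "?x \<notin> (\<lambda>i. int (\<tau> i)) ` {1..C-1}"
    proof
      assume "?x \<in> (\<lambda>i. int (\<tau> i)) ` {1..C-1}"
      then obtain i where i: "i \<in> {1..C-1}" "\<tau> C = \<tau> i" by auto
      then have "i = C" using inj C by (auto dest: inj_onD)
      then show False using i C by auto
    qed
    ultimately show ?thesis unfolding Sset_def using x0 by auto
  qed
  then show "Lst (Sset n \<tau> (C - 1)) (int n + 1) (Nf(Pf ?x := Nf ?x)) (Pf(Nf ?x := Pf ?x))"
    using Lst_del[OF L xS x0] by simp
qed




definition bodyB :: com where
  "bodyB = Seq (Assign ''x'' (Get ''a'' (V ''c'')))
    (Seq (Assign ''y'' (Get ''nx'' (V ''x'')))
    (Seq (Assign ''z'' (Get ''pv'' (V ''x'')))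
    (Seq (ASet ''mm'' (V ''c'') (V ''y''))
    (Seq (ASet ''qq'' (V ''c'') (V ''z''))
    (Seq (ASet ''nx'' (V ''z'') (V ''y''))
    (Seq (ASet ''pv'' (V ''y'') (V ''z''))
         (Assign ''c'' (Minus (V ''c'') (N 1)))))))))"

definition bwdL :: com where
  "bwdL = Seq (Assign ''c'' (V ''n'')) (While (Less (N 0) (V ''c'')) bodyB)"

lemma Lst_init:
  assumes "\<forall>w\<in>{0..hi}. Nf w = w+1 \<and> Pf w = w - 1" "0 \<le> hi"
  shows "Lst {0..hi} hi Nf Pf"
  unfolding Lst_def using assms by force

lemma Sset_full:
  assumes inj: "inj_on \<tau> {1..n}" and rg: "\<tau> ` {1..n} \<subseteq> {1..n}"
  shows "Sset n \<tau> n = {0..int n + 1}"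
proof -
  have "\<tau> ` {1..n} = {1..n}" using endo_inj_surj[OF _ rg inj] by simp
  then have "(\<lambda>i. int (\<tau> i)) ` {1..n} = int ` {1..n}" by (metis image_image)
  also have "\<dots> = {1..int n}" by (simp add: image_int_atLeastAtMost)
  finally show ?thesis unfolding Sset_def by auto
qed

lemma bwdL_ok:
  assumes n: "fst s ''n'' = int n"
    and a: "\<forall>i\<in>{1..n}. snd s ''a'' (int i) = int (\<tau> i)"
    and inj: "inj_on \<tau> {1..n}" and rg: "\<tau> ` {1..n} \<subseteq> {1..n}"
    and init: "\<forall>w\<in>{0..int n+1}. snd s ''nx'' w = w+1 \<and> snd s ''pv'' w = w - 1"
  shows "\<exists>t s'. exec bwdL s t s' \<and> t \<le> 16 * n + 20 \<and> fst s' ''n'' = int n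
    \<and> (\<forall>x. x \<notin> {''nx'',''pv'',''mm'',''qq''} \<longrightarrow> snd s' x = snd s x)
    \<and> (\<forall>b\<in>{1..n}. Pm n \<tau> b (snd s' ''mm'' (int b)) \<and> Pq n \<tau> b (snd s' ''qq'' (int b)))"
proof -
  define s1 where "s1 = ((fst s)(''c'' := int n), snd s)"
  have e1: "exec (Assign ''c'' (V ''n'')) s 1 s1" unfolding s1_def using exec.Assign[of "''c''" "V ''n''" s] n by simp
  define I where "I = (\<lambda>r::state. fst r ''n'' = int n \<and> 0 \<le> fst r ''c'' \<and> fst r ''c'' \<le> int n
    \<and> (\<forall>x. x \<notin> {''nx'',''pv'',''mm'',''qq''} \<longrightarrow> snd r x = snd s x)
    \<and> Lst (Sset n \<tau> (nat (fst r ''c''))) (int n + 1) (snd r ''nx'') (snd r ''pv'')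
    \<and> (\<forall>b\<in>{nat (fst r ''c'')<..n}. Pm n \<tau> b (snd r ''mm'' (int b)) \<and> Pq n \<tau> b (snd r ''qq'' (int b))))"
  define \<mu> where "\<mu> = (\<lambda>r::state. nat (fst r ''c''))"
  have "\<exists>t s'. exec (While (Less (N 0) (V ''c'')) bodyB) s1 t s' \<and> t \<le> (15+1) * \<mu> s1 + 1 \<and> I s' \<and> \<not> bval (Less (N 0) (V ''c'')) s'"
  proof (rule while_lf)
    have "Lst (Sset n \<tau> n) (int n + 1) (snd s ''nx'') (snd s ''pv'')"
      unfolding Sset_full[OF inj rg] using init by (intro Lst_init) auto
    moreover have "nat (int n) = n" by simp
    ultimately show "I s1" unfolding I_def s1_def using n by simp
    show "loopfree bodyB" by (simp add: bodyB_def)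
  next
    fix r assume I: "I r" and b: "bval (Less (N 0) (V ''c'')) r"
    define C where "C = nat (fst r ''c'')"
    have Iu: "fst r ''n'' = int n" "0 \<le> fst r ''c''" "fst r ''c'' \<le> int n"
      "\<forall>x. x \<notin> {''nx'',''pv'',''mm'',''qq''} \<longrightarrow> snd r x = snd s x"
      "Lst (Sset n \<tau> C) (int n + 1) (snd r ''nx'') (snd r ''pv'')"
      "\<forall>b\<in>{C<..n}. Pm n \<tau> b (snd r ''mm'' (int b)) \<and> Pq n \<tau> b (snd r ''qq'' (int b))"
      using I unfolding I_def C_def by blast+
    have C: "1 \<le> C" "C \<le> n" "fst r ''c'' = int C" using Iu(2,3) b unfolding C_def by auto
    note L = Iu(5)
    have ar: "snd r ''a'' = snd s ''a''" using Iu(4) by simp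
    have xv: "snd r ''a'' (int C) = int (\<tau> C)" using ar a C by auto
    note M = bwd_math[OF L C(1,2) inj rg]
    let ?x = "int (\<tau> C)"
    let ?N = "snd r ''nx''" let ?P = "snd r ''pv''"
    have ev: "snd (lf bodyB r) = ((fst r)(''x'' := ?x, ''y'' := ?N ?x, ''z'' := ?P ?x, ''c'' := int C - 1),
        (snd r)(''mm'' := (snd r ''mm'')(int C := ?N ?x), ''qq'' := (snd r ''qq'')(int C := ?P ?x),
                ''nx'' := ?N(?P ?x := ?N ?x), ''pv'' := ?P(?N ?x := ?P ?x)))"
      by (simp add: bodyB_def Let_def C(3) xv)
    have tm: "fst (lf bodyB r) \<le> 15" by (simp add: bodyB_def Let_def)
    have "I (snd (lf bodyB r))"
      unfolding ev I_def
    proof (simp only: fst_conv snd_conv, intro conjI)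
      show "((fst r)(''x'' := ?x, ''y'' := ?N ?x, ''z'' := ?P ?x, ''c'' := int C - 1)) ''n'' = int n"
        using Iu(1) by simp
      show "0 \<le> ((fst r)(''x'' := ?x, ''y'' := ?N ?x, ''z'' := ?P ?x, ''c'' := int C - 1)) ''c''" using C by simp
      show "((fst r)(''x'' := ?x, ''y'' := ?N ?x, ''z'' := ?P ?x, ''c'' := int C - 1)) ''c'' \<le> int n" using C by simp
      show "\<forall>x. x \<notin> {''nx'', ''pv'', ''mm'', ''qq''} \<longrightarrow>
        ((snd r)(''mm'' := (snd r ''mm'')(int C := ?N ?x), ''qq'' := (snd r ''qq'')(int C := ?P ?x),
                ''nx'' := ?N(?P ?x := ?N ?x), ''pv'' := ?P(?N ?x := ?P ?x))) x = snd s x"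
        using Iu(4) by simp
      have cc: "nat (int C - 1) = C - 1" using C by auto
      show "Lst (Sset n \<tau> (nat (((fst r)(''x'' := ?x, ''y'' := ?N ?x, ''z'' := ?P ?x, ''c'' := int C - 1)) ''c'')))
         (int n + 1)
         (((snd r)(''mm'' := (snd r ''mm'')(int C := ?N ?x), ''qq'' := (snd r ''qq'')(int C := ?P ?x),
                ''nx'' := ?N(?P ?x := ?N ?x), ''pv'' := ?P(?N ?x := ?P ?x))) ''nx'')
         (((snd r)(''mm'' := (snd r ''mm'')(int C := ?N ?x), ''qq'' := (snd r ''qq'')(int C := ?P ?x),
                ''nx'' := ?N(?P ?x := ?N ?x), ''pv'' := ?P(?N ?x := ?P ?x))) ''pv'')"
        using M(3) cc by simp
      have old: "\<forall>b\<in>{C<..n}. Pm n \<tau> b (snd r ''mm'' (int b)) \<and> Pq n \<tau> b (snd r ''qq'' (int b))"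
        by (fact Iu(6))
      show "\<forall>b\<in>{nat (((fst r)(''x'' := ?x, ''y'' := ?N ?x, ''z'' := ?P ?x, ''c'' := int C - 1)) ''c'')<..n}.
        Pm n \<tau> b (((snd r)(''mm'' := (snd r ''mm'')(int C := ?N ?x), ''qq'' := (snd r ''qq'')(int C := ?P ?x),
                ''nx'' := ?N(?P ?x := ?N ?x), ''pv'' := ?P(?N ?x := ?P ?x))) ''mm'' (int b)) \<and>
        Pq n \<tau> b (((snd r)(''mm'' := (snd r ''mm'')(int C := ?N ?x), ''qq'' := (snd r ''qq'')(int C := ?P ?x),
                ''nx'' := ?N(?P ?x := ?N ?x), ''pv'' := ?P(?N ?x := ?P ?x))) ''qq'' (int b))"
      proof
        fix b assume "b \<in> {nat (((fst r)(''x'' := ?x, ''y'' := ?N ?x, ''z'' := ?P ?x, ''c'' := int C - 1)) ''c'')<..n}"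
        then have bb: "b \<in> {C-1<..n}" using cc by simp
        show "Pm n \<tau> b (((snd r)(''mm'' := (snd r ''mm'')(int C := ?N ?x), ''qq'' := (snd r ''qq'')(int C := ?P ?x),
                ''nx'' := ?N(?P ?x := ?N ?x), ''pv'' := ?P(?N ?x := ?P ?x))) ''mm'' (int b)) \<and>
        Pq n \<tau> b (((snd r)(''mm'' := (snd r ''mm'')(int C := ?N ?x), ''qq'' := (snd r ''qq'')(int C := ?P ?x),
                ''nx'' := ?N(?P ?x := ?N ?x), ''pv'' := ?P(?N ?x := ?P ?x))) ''qq'' (int b))"
        proof (cases "b = C")
          case True then show ?thesis using M(1,2) by simp
        next
          case False then have "b \<in> {C<..n}" using bb by auto
          then show ?thesis using old False by simp
        qed
      qed
    qed
    moreover have "\<mu> (snd (lf bodyB r)) < \<mu> r" unfolding ev \<mu>_def using C by simp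
    ultimately show "fst (lf bodyB r) \<le> 15 \<and> I (snd (lf bodyB r)) \<and> \<mu> (snd (lf bodyB r)) < \<mu> r"
      using tm by blast
  qed
  then obtain t s' where w: "exec (While (Less (N 0) (V ''c'')) bodyB) s1 t s'" "t \<le> (15+1) * \<mu> s1 + 1" "I s'" "\<not> bval (Less (N 0) (V ''c'')) s'"
    by blast
  have "exec bwdL s (1 + t + 1) s'" unfolding bwdL_def using e1 w(1) by (rule exec.Seq)
  moreover have "\<mu> s1 = n" unfolding \<mu>_def s1_def by auto
  then have "1 + t + 1 \<le> 16 * n + 20" using w(2) by auto
  have Iu: "fst s' ''n'' = int n" "0 \<le> fst s' ''c''" "fst s' ''c'' \<le> int n"
      "\<forall>x. x \<notin> {''nx'',''pv'',''mm'',''qq''} \<longrightarrow> snd s' x = snd s x"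
      "\<forall>b\<in>{nat (fst s' ''c'')<..n}. Pm n \<tau> b (snd s' ''mm'' (int b)) \<and> Pq n \<tau> b (snd s' ''qq'' (int b))"
      using w(3) unfolding I_def by blast+
  have c0: "fst s' ''c'' = 0" using Iu(2) w(4) by simp
  have "{nat (fst s' ''c'')<..n} = {1..n}" using c0 by auto
  then have "fst s' ''n'' = int n \<and> (\<forall>x. x \<notin> {''nx'',''pv'',''mm'',''qq''} \<longrightarrow> snd s' x = snd s x)
    \<and> (\<forall>b\<in>{1..n}. Pm n \<tau> b (snd s' ''mm'' (int b)) \<and> Pq n \<tau> b (snd s' ''qq'' (int b)))"
    using Iu by simp
  ultimately show ?thesis using \<open>1 + t + 1 \<le> 16 * n + 20\<close> by (intro exI[of _ "1+t+1"] exI[of _ s']) blast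
qed




lemma fwd_NE:
  assumes P: "\<forall>b\<in>{1..n}. Pm n \<tau> b (M b)" and C: "1 \<le> C" "C \<le> n"
    and rg: "\<tau> ` {1..n} \<subseteq> {1..n}"
    and m1: "\<forall>b\<in>{1..<C}. mn \<le> M b" and m2: "mn = int n + 1 \<or> (\<exists>b\<in>{1..<C}. mn = M b)"
  shows "is_NE n \<tau> C \<longleftrightarrow> mn < int (\<tau> C)"
proof
  assume "is_NE n \<tau> C"
  then obtain a b where ab: "a \<in> {1..n}" "b \<in> {1..n}" "a < b" "b < C" "\<tau> b < \<tau> a" "\<tau> a < \<tau> C"
    unfolding is_NE_def by blast
  have "M b \<le> int (\<tau> a)" using P ab unfolding Pm_def by auto
  moreover have "mn \<le> M b" using m1 ab by auto
  ultimately show "mn < int (\<tau> C)" using ab by auto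
next
  assume lt: "mn < int (\<tau> C)"
  have tC: "\<tau> C \<le> n" using rg C by (meson atLeastAtMost_iff image_subset_iff)
  then obtain b where b: "b \<in> {1..<C}" "mn = M b" using m2 lt by auto
  have Pb: "Pm n \<tau> b (M b)" using P b C by auto
  then have "M b \<noteq> int n + 1" using b lt tC by auto
  then obtain a where a: "a \<in> {1..<b}" "M b = int (\<tau> a)" using Pb unfolding Pm_def by auto
  have "\<tau> b < \<tau> a" using Pb a unfolding Pm_def by auto
  then show "is_NE n \<tau> C" unfolding is_NE_def using a b lt C
    by (intro bexI[of _ a] bexI[of _ b]) auto
qed

lemma fwd_SE:
  assumes P: "\<forall>b\<in>{1..n}. Pq n \<tau> b (Q b)" and C: "1 \<le> C" "C \<le> n"
    and rg: "\<tau> ` {1..n} \<subseteq> {1..n}"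
    and m1: "\<forall>b\<in>{1..<C}. Q b \<le> mx" and m2: "mx = 0 \<or> (\<exists>b\<in>{1..<C}. mx = Q b)"
  shows "is_SE n \<tau> C \<longleftrightarrow> int (\<tau> C) < mx"
proof
  assume "is_SE n \<tau> C"
  then obtain a b where ab: "a \<in> {1..n}" "b \<in> {1..n}" "a < b" "b < C" "\<tau> C < \<tau> a" "\<tau> a < \<tau> b"
    unfolding is_SE_def by blast
  have "int (\<tau> a) \<le> Q b" using P ab unfolding Pq_def by auto
  moreover have "Q b \<le> mx" using m1 ab by auto
  ultimately show "int (\<tau> C) < mx" using ab by auto
next
  assume lt: "int (\<tau> C) < mx"
  then obtain b where b: "b \<in> {1..<C}" "mx = Q b" using m2 by auto
  have Pb: "Pq n \<tau> b (Q b)" using P b C by auto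
  then have "Q b \<noteq> 0" using b lt by auto
  then obtain a where a: "a \<in> {1..<b}" "Q b = int (\<tau> a)" using Pb unfolding Pq_def by auto
  have "\<tau> a < \<tau> b" using Pb a unfolding Pq_def by auto
  then show "is_SE n \<tau> C" unfolding is_SE_def using a b lt C
    by (intro bexI[of _ a] bexI[of _ b]) auto
qed




definition bodyF :: com where
  "bodyF = Seq (Assign ''x'' (Get ''a'' (V ''c'')))
   (Seq (If (Less (V ''mn'') (V ''x'')) (ASet ''f'' (V ''c'') (N 1)) (ASet ''f'' (V ''c'') (N 0)))
   (Seq (If (Less (V ''x'') (V ''mx'')) (ASet ''g'' (V ''c'') (N 1)) (ASet ''g'' (V ''c'') (N 0)))
   (Seq (If (Less (Get ''mm'' (V ''c'')) (V ''mn'')) (Assign ''mn'' (Get ''mm'' (V ''c''))) Skip)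
   (Seq (If (Less (V ''mx'') (Get ''qq'' (V ''c''))) (Assign ''mx'' (Get ''qq'' (V ''c''))) Skip)
        (Assign ''c'' (Plus (V ''c'') (N 1)))))))"

definition fwdL :: com where
  "fwdL = Seq (Seq (Assign ''c'' (N 1)) (Seq (Assign ''mn'' (Plus (V ''n'') (N 1))) (Assign ''mx'' (N 0))))
     (While (Less (V ''c'') (Plus (V ''n'') (N 1))) bodyF)"

definition code01 :: "bool \<Rightarrow> int" where "code01 b = (if b then 1 else 0)"

lemma bodyF_eval:
  assumes "fst r ''c'' = int C" "snd r ''a'' (int C) = X"
  defines "r' \<equiv> snd (lf bodyF r)"
  shows "fst r' ''n'' = fst r ''n''" "fst r' ''c'' = int C + 1"
    "fst r' ''mn'' = (if snd r ''mm'' (int C) < fst r ''mn'' then snd r ''mm'' (int C) else fst r ''mn'')"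
    "fst r' ''mx'' = (if fst r ''mx'' < snd r ''qq'' (int C) then snd r ''qq'' (int C) else fst r ''mx'')"
    "\<forall>x. x \<notin> {''f'',''g''} \<longrightarrow> snd r' x = snd r x"
    "snd r' ''f'' = (snd r ''f'')(int C := code01 (fst r ''mn'' < X))"
    "snd r' ''g'' = (snd r ''g'')(int C := code01 (X < fst r ''mx''))"
    "fst (lf bodyF r) \<le> 15"
  using assms by (auto simp: bodyF_def Let_def code01_def)




lemma fwdL_ok:
  assumes n: "fst s ''n'' = int n"
    and a: "\<forall>i\<in>{1..n}. snd s ''a'' (int i) = int (\<tau> i)"
    and rg: "\<tau> ` {1..n} \<subseteq> {1..n}"
    and PM: "\<forall>b\<in>{1..n}. Pm n \<tau> b (snd s ''mm'' (int b)) \<and> Pq n \<tau> b (snd s ''qq'' (int b))"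
  shows "\<exists>t s'. exec fwdL s t s' \<and> t \<le> 16 * n + 30 \<and> fst s' ''n'' = int n
    \<and> (\<forall>x. x \<notin> {''f'',''g''} \<longrightarrow> snd s' x = snd s x)
    \<and> (\<forall>b\<in>{1..n}. snd s' ''f'' (int b) = code01 (is_NE n \<tau> b) \<and> snd s' ''g'' (int b) = code01 (is_SE n \<tau> b))"
proof -
  define s1 where "s1 = ((fst s)(''c'' := 1, ''mn'' := int n + 1, ''mx'' := 0), snd s)"
  have e1: "exec (Seq (Assign ''c'' (N 1)) (Seq (Assign ''mn'' (Plus (V ''n'') (N 1))) (Assign ''mx'' (N 0)))) s 5 s1"
  proof -
    let ?c = "Seq (Assign ''c'' (N 1)) (Seq (Assign ''mn'' (Plus (V ''n'') (N 1))) (Assign ''mx'' (N 0)))"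
    have "exec ?c s (fst (lf ?c s)) (snd (lf ?c s))" by (rule lf_exec) simp
    moreover have "fst (lf ?c s) = 5" "snd (lf ?c s) = s1" by (simp_all add: s1_def n Let_def)
    ultimately show ?thesis by (simp only:)
  qed
  have P1: "\<forall>b\<in>{1..n}. Pm n \<tau> b (snd s ''mm'' (int b))" and P2: "\<forall>b\<in>{1..n}. Pq n \<tau> b (snd s ''qq'' (int b))"
    using PM by auto
  define I where "I = (\<lambda>r::state. fst r ''n'' = int n \<and> 1 \<le> fst r ''c'' \<and> fst r ''c'' \<le> int n + 1
    \<and> (\<forall>x. x \<notin> {''f'',''g''} \<longrightarrow> snd r x = snd s x)
    \<and> (\<forall>b\<in>{1..<nat (fst r ''c'')}. fst r ''mn'' \<le> snd s ''mm'' (int b))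
    \<and> (fst r ''mn'' = int n + 1 \<or> (\<exists>b\<in>{1..<nat (fst r ''c'')}. fst r ''mn'' = snd s ''mm'' (int b)))
    \<and> (\<forall>b\<in>{1..<nat (fst r ''c'')}. snd s ''qq'' (int b) \<le> fst r ''mx'')
    \<and> (fst r ''mx'' = 0 \<or> (\<exists>b\<in>{1..<nat (fst r ''c'')}. fst r ''mx'' = snd s ''qq'' (int b)))
    \<and> (\<forall>b\<in>{1..<nat (fst r ''c'')}. snd r ''f'' (int b) = code01 (is_NE n \<tau> b) \<and> snd r ''g'' (int b) = code01 (is_SE n \<tau> b)))"
  define \<mu> where "\<mu> = (\<lambda>r::state. nat (int n + 1 - fst r ''c''))"
  have "\<exists>t s'. exec (While (Less (V ''c'') (Plus (V ''n'') (N 1))) bodyF) s1 t s' \<and> t \<le> (15+1) * \<mu> s1 + 1 \<and> I s' \<and> \<not> bval (Less (V ''c'') (Plus (V ''n'') (N 1))) s'"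
  proof (rule while_lf)
    show "I s1" unfolding I_def s1_def using n by auto
    show "loopfree bodyF" by (simp add: bodyF_def)
  next
    fix r assume I: "I r" and b: "bval (Less (V ''c'') (Plus (V ''n'') (N 1))) r"
    define C where "C = nat (fst r ''c'')"
    have Iu: "fst r ''n'' = int n" "1 \<le> fst r ''c''" "fst r ''c'' \<le> int n + 1"
      "\<forall>x. x \<notin> {''f'',''g''} \<longrightarrow> snd r x = snd s x"
      "\<forall>b\<in>{1..<C}. fst r ''mn'' \<le> snd s ''mm'' (int b)"
      "fst r ''mn'' = int n + 1 \<or> (\<exists>b\<in>{1..<C}. fst r ''mn'' = snd s ''mm'' (int b))"
      "\<forall>b\<in>{1..<C}. snd s ''qq'' (int b) \<le> fst r ''mx''"
      "fst r ''mx'' = 0 \<or> (\<exists>b\<in>{1..<C}. fst r ''mx'' = snd s ''qq'' (int b))"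
      "\<forall>b\<in>{1..<C}. snd r ''f'' (int b) = code01 (is_NE n \<tau> b) \<and> snd r ''g'' (int b) = code01 (is_SE n \<tau> b)"
      using I unfolding I_def C_def by blast+
    have C: "1 \<le> C" "C \<le> n" "fst r ''c'' = int C" using Iu(1,2,3) b unfolding C_def by auto
    have ar: "snd r ''a'' = snd s ''a''" "snd r ''mm'' = snd s ''mm''" "snd r ''qq'' = snd s ''qq''" using Iu(4) by simp_all
    have xv: "snd r ''a'' (int C) = int (\<tau> C)" using ar a C by auto
    note E = bodyF_eval[OF C(3) xv]
    have NE: "is_NE n \<tau> C \<longleftrightarrow> fst r ''mn'' < int (\<tau> C)"
      by (rule fwd_NE[OF P1 C(1,2) rg Iu(5,6)])
    have SE: "is_SE n \<tau> C \<longleftrightarrow> int (\<tau> C) < fst r ''mx''"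
      by (rule fwd_SE[OF P2 C(1,2) rg Iu(7,8)])
    have nc: "nat (int C + 1) = Suc C" by simp
    have rng: "{1..<Suc C} = insert C {1..<C}" using C by auto
    let ?r = "snd (lf bodyF r)"
    have "I ?r" unfolding I_def
    proof (intro conjI)
      show "fst ?r ''n'' = int n" using E(1) Iu(1) by simp
      show "1 \<le> fst ?r ''c''" "fst ?r ''c'' \<le> int n + 1" using E(2) C by auto
      show "\<forall>x. x \<notin> {''f'',''g''} \<longrightarrow> snd ?r x = snd s x" using E(5) Iu(4) by simp
      show "\<forall>b\<in>{1..<nat (fst ?r ''c'')}. fst ?r ''mn'' \<le> snd s ''mm'' (int b)"
        unfolding E(2) nc rng E(3) ar using Iu(5) by auto
      show "fst ?r ''mn'' = int n + 1 \<or> (\<exists>b\<in>{1..<nat (fst ?r ''c'')}. fst ?r ''mn'' = snd s ''mm'' (int b))"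
        unfolding E(2) nc rng E(3) ar using Iu(6) by auto
      show "\<forall>b\<in>{1..<nat (fst ?r ''c'')}. snd s ''qq'' (int b) \<le> fst ?r ''mx''"
        unfolding E(2) nc rng E(4) ar using Iu(7) by auto
      show "fst ?r ''mx'' = 0 \<or> (\<exists>b\<in>{1..<nat (fst ?r ''c'')}. fst ?r ''mx'' = snd s ''qq'' (int b))"
        unfolding E(2) nc rng E(4) ar using Iu(8) by auto
      show "\<forall>b\<in>{1..<nat (fst ?r ''c'')}. snd ?r ''f'' (int b) = code01 (is_NE n \<tau> b) \<and> snd ?r ''g'' (int b) = code01 (is_SE n \<tau> b)"
        unfolding E(2) nc rng E(6) E(7) using Iu(9) NE SE by auto
    qed
    moreover have "\<mu> ?r < \<mu> r" unfolding \<mu>_def E(2) using C by simp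
    ultimately show "fst (lf bodyF r) \<le> 15 \<and> I ?r \<and> \<mu> ?r < \<mu> r" using E(8) by blast
  qed
  then obtain t s' where w: "exec (While (Less (V ''c'') (Plus (V ''n'') (N 1))) bodyF) s1 t s'" "t \<le> (15+1) * \<mu> s1 + 1" "I s'" "\<not> bval (Less (V ''c'') (Plus (V ''n'') (N 1))) s'"
    by blast
  have "exec fwdL s (5 + t + 1) s'" unfolding fwdL_def using exec.Seq[OF e1 w(1)] .
  moreover have "\<mu> s1 = n" unfolding \<mu>_def s1_def by auto
  then have tt: "5 + t + 1 \<le> 16 * n + 30" using w(2) by auto
  have Iu: "fst s' ''n'' = int n" "1 \<le> fst s' ''c''" "fst s' ''c'' \<le> int n + 1"
      "\<forall>x. x \<notin> {''f'',''g''} \<longrightarrow> snd s' x = snd s x"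
      "\<forall>b\<in>{1..<nat (fst s' ''c'')}. snd s' ''f'' (int b) = code01 (is_NE n \<tau> b) \<and> snd s' ''g'' (int b) = code01 (is_SE n \<tau> b)"
      using w(3) unfolding I_def by blast+
  have "{1..<nat (fst s' ''c'')} = {1..n}" using Iu(1,2,3) w(4) by auto
  then have "fst s' ''n'' = int n \<and> (\<forall>x. x \<notin> {''f'',''g''} \<longrightarrow> snd s' x = snd s x)
    \<and> (\<forall>b\<in>{1..n}. snd s' ''f'' (int b) = code01 (is_NE n \<tau> b) \<and> snd s' ''g'' (int b) = code01 (is_SE n \<tau> b))"
    using Iu by simp
  ultimately show ?thesis using tt by (intro exI[of _ "5+t+1"] exI[of _ s']) blast
qed




definition FRAG :: com where "FRAG = Seq initL (Seq bwdL fwdL)"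

lemma FRAG_ok:
  assumes n: "fst s ''n'' = int n"
    and a: "\<forall>i\<in>{1..n}. snd s ''a'' (int i) = int (\<tau> i)"
    and inj: "inj_on \<tau> {1..n}" and rg: "\<tau> ` {1..n} \<subseteq> {1..n}"
  shows "\<exists>t s'. exec FRAG s t s' \<and> t \<le> 38 * n + 80 \<and> fst s' ''n'' = int n
    \<and> (\<forall>x. x \<notin> {''nx'',''pv'',''mm'',''qq'',''f'',''g''} \<longrightarrow> snd s' x = snd s x)
    \<and> (\<forall>b\<in>{1..n}. snd s' ''f'' (int b) = code01 (is_NE n \<tau> b) \<and> snd s' ''g'' (int b) = code01 (is_SE n \<tau> b))"
proof -
  obtain t1 s1 where 1: "exec initL s t1 s1" "t1 \<le> 6 * n + 20" "fst s1 ''n'' = int n"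
    "\<forall>x. x \<notin> {''nx'',''pv''} \<longrightarrow> snd s1 x = snd s x"
    "\<forall>w\<in>{0..int n+1}. snd s1 ''nx'' w = w+1 \<and> snd s1 ''pv'' w = w - 1"
    using initL_ok[OF n] by (elim exE conjE) (rule that; assumption)
  have a1: "\<forall>i\<in>{1..n}. snd s1 ''a'' (int i) = int (\<tau> i)" using a 1(4) by simp
  obtain t2 s2 where 2: "exec bwdL s1 t2 s2" "t2 \<le> 16 * n + 20" "fst s2 ''n'' = int n"
    "\<forall>x. x \<notin> {''nx'',''pv'',''mm'',''qq''} \<longrightarrow> snd s2 x = snd s1 x"
    "\<forall>b\<in>{1..n}. Pm n \<tau> b (snd s2 ''mm'' (int b)) \<and> Pq n \<tau> b (snd s2 ''qq'' (int b))"
    using bwdL_ok[OF 1(3) a1 inj rg 1(5)] by (elim exE conjE) (rule that; assumption)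
  have a2: "\<forall>i\<in>{1..n}. snd s2 ''a'' (int i) = int (\<tau> i)" using a1 2(4) by simp
  obtain t3 s3 where 3: "exec fwdL s2 t3 s3" "t3 \<le> 16 * n + 30" "fst s3 ''n'' = int n"
    "\<forall>x. x \<notin> {''f'',''g''} \<longrightarrow> snd s3 x = snd s2 x"
    "\<forall>b\<in>{1..n}. snd s3 ''f'' (int b) = code01 (is_NE n \<tau> b) \<and> snd s3 ''g'' (int b) = code01 (is_SE n \<tau> b)"
    using fwdL_ok[OF 2(3) a2 rg 2(5)] by (elim exE conjE) (rule that; assumption)
  have ex: "exec FRAG s (t1 + (t2 + t3 + 1) + 1) s3" unfolding FRAG_def
    using exec.Seq[OF 1(1) exec.Seq[OF 2(1) 3(1)]] .
  have tb: "t1 + (t2 + t3 + 1) + 1 \<le> 38 * n + 80" using 1(2) 2(2) 3(2) by simp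
  have fr: "\<forall>x. x \<notin> {''nx'',''pv'',''mm'',''qq'',''f'',''g''} \<longrightarrow> snd s3 x = snd s x"
    using 1(4) 2(4) 3(4) by simp
  show ?thesis by (rule exI[of _ "t1 + (t2 + t3 + 1) + 1"], rule exI[of _ s3], intro conjI) (fact ex tb fr 3(3) 3(5))+
qed




lemma NW_mirror:
  assumes "a \<in> {1..n}"
  shows "is_NW n \<sigma> a \<longleftrightarrow> is_NE n (\<lambda>i. \<sigma> (n + 1 - i)) (n + 1 - a)"
proof
  assume "is_NW n \<sigma> a"
  then obtain b c where bc: "b \<in> {1..n}" "c \<in> {1..n}" "a < b" "b < c" "\<sigma> b < \<sigma> c" "\<sigma> c < \<sigma> a"
    unfolding is_NW_def by blast
  show "is_NE n (\<lambda>i. \<sigma> (n + 1 - i)) (n + 1 - a)" unfolding is_NE_def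
    using bc assms by (intro bexI[of _ "n+1-c"] bexI[of _ "n+1-b"]) auto
next
  assume "is_NE n (\<lambda>i. \<sigma> (n + 1 - i)) (n + 1 - a)"
  then obtain x y where xy: "x \<in> {1..n}" "y \<in> {1..n}" "x < y" "y < n + 1 - a"
    "\<sigma> (n+1-y) < \<sigma> (n+1-x)" "\<sigma> (n+1-x) < \<sigma> (n + 1 - (n + 1 - a))"
    unfolding is_NE_def by blast
  have "n + 1 - (n + 1 - a) = a" using assms by auto
  then show "is_NW n \<sigma> a" unfolding is_NW_def
    using xy assms by (intro bexI[of _ "n+1-x"] bexI[of _ "n+1-y"]) auto
qed

lemma SW_mirror:
  assumes "a \<in> {1..n}"
  shows "is_SW n \<sigma> a \<longleftrightarrow> is_SE n (\<lambda>i. \<sigma> (n + 1 - i)) (n + 1 - a)"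
proof
  assume "is_SW n \<sigma> a"
  then obtain b c where bc: "b \<in> {1..n}" "c \<in> {1..n}" "a < b" "b < c" "\<sigma> a < \<sigma> c" "\<sigma> c < \<sigma> b"
    unfolding is_SW_def by blast
  show "is_SE n (\<lambda>i. \<sigma> (n + 1 - i)) (n + 1 - a)" unfolding is_SE_def
    using bc assms by (intro bexI[of _ "n+1-c"] bexI[of _ "n+1-b"]) auto
next
  assume "is_SE n (\<lambda>i. \<sigma> (n + 1 - i)) (n + 1 - a)"
  then obtain x y where xy: "x \<in> {1..n}" "y \<in> {1..n}" "x < y" "y < n + 1 - a"
    "\<sigma> (n + 1 - (n + 1 - a)) < \<sigma> (n+1-x)" "\<sigma> (n+1-x) < \<sigma> (n+1-y)"
    unfolding is_SE_def by blast
  have "n + 1 - (n + 1 - a) = a" using assms by auto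
  then show "is_SW n \<sigma> a" unfolding is_SW_def
    using xy assms by (intro bexI[of _ "n+1-x"] bexI[of _ "n+1-y"]) auto
qed




definition forL :: "com \<Rightarrow> com" where
  "forL B0 = Seq (Assign ''c'' (N 1)) (While (Less (V ''c'') (Plus (V ''n'') (N 1))) (Seq B0 (Assign ''c'' (Plus (V ''c'') (N 1)))))"

lemma for_loop:
  fixes s :: state
  assumes B0: "loopfree B0" and n: "fst s ''n'' = int n"
    and step: "\<And>r C. fst r ''n'' = int n \<Longrightarrow> fst r ''c'' = int C \<Longrightarrow> 1 \<le> C \<Longrightarrow> C \<le> n \<Longrightarrow>
      (\<forall>x. x \<notin> W \<longrightarrow> snd r x = snd s x) \<Longrightarrow>
      fst (lf B0 r) \<le> k \<and> fst (snd (lf B0 r)) = fst r \<and> (\<forall>x. x \<notin> W \<longrightarrow> snd (snd (lf B0 r)) x = snd r x)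
      \<and> (\<forall>x\<in>W. snd (snd (lf B0 r)) x = (snd r x)(int C := F x C))"
  shows "\<exists>t s'. exec (forL B0) s t s' \<and> t \<le> (k+3) * n + 3 \<and> fst s' ''n'' = int n
    \<and> (\<forall>x. x \<notin> W \<longrightarrow> snd s' x = snd s x) \<and> (\<forall>x\<in>W. \<forall>b\<in>{1..n}. snd s' x (int b) = F x b)"
proof -
  define s1 where "s1 = ((fst s)(''c'' := 1), snd s)"
  have e1: "exec (Assign ''c'' (N 1)) s 1 s1" unfolding s1_def using exec.Assign[of "''c''" "N 1" s] by simp
  define I where "I = (\<lambda>r::state. fst r ''n'' = int n \<and> 1 \<le> fst r ''c'' \<and> fst r ''c'' \<le> int n + 1
    \<and> (\<forall>x. x \<notin> W \<longrightarrow> snd r x = snd s x)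
    \<and> (\<forall>x\<in>W. \<forall>b\<in>{1..<nat (fst r ''c'')}. snd r x (int b) = F x b))"
  define \<mu> where "\<mu> = (\<lambda>r::state. nat (int n + 1 - fst r ''c''))"
  let ?B = "Seq B0 (Assign ''c'' (Plus (V ''c'') (N 1)))"
  have "\<exists>t s'. exec (While (Less (V ''c'') (Plus (V ''n'') (N 1))) ?B) s1 t s' \<and> t \<le> (k+2+1) * \<mu> s1 + 1 \<and> I s' \<and> \<not> bval (Less (V ''c'') (Plus (V ''n'') (N 1))) s'"
  proof (rule while_lf)
    show "I s1" unfolding I_def s1_def using n by auto
    show "loopfree ?B" using B0 by simp
  next
    fix r assume I: "I r" and b: "bval (Less (V ''c'') (Plus (V ''n'') (N 1))) r"
    define C where "C = nat (fst r ''c'')"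
    have Iu: "fst r ''n'' = int n" "1 \<le> fst r ''c''" "fst r ''c'' \<le> int n + 1"
      "\<forall>x. x \<notin> W \<longrightarrow> snd r x = snd s x"
      "\<forall>x\<in>W. \<forall>b\<in>{1..<C}. snd r x (int b) = F x b"
      using I unfolding I_def C_def by blast+
    have C: "1 \<le> C" "C \<le> n" "fst r ''c'' = int C" using Iu(1,2,3) b unfolding C_def by auto
    note S = step[OF Iu(1) C(3) C(1,2) Iu(4)]
    define r' where "r' = snd (lf B0 r)"
    have ev: "snd (lf ?B r) = ((fst r)(''c'' := int C + 1), snd r')" "fst (lf ?B r) = fst (lf B0 r) + 2"
      using S C(3) by (simp_all add: Let_def r'_def)
    have "I (snd (lf ?B r))" unfolding I_def ev(1)
    proof (simp only: fst_conv snd_conv, intro conjI)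
      show "((fst r)(''c'' := int C + 1)) ''n'' = int n" using Iu(1) by simp
      show "1 \<le> ((fst r)(''c'' := int C + 1)) ''c''" "((fst r)(''c'' := int C + 1)) ''c'' \<le> int n + 1" using C by auto
      show "\<forall>x. x \<notin> W \<longrightarrow> snd r' x = snd s x" using S Iu(4) unfolding r'_def by simp
      have nc: "nat (((fst r)(''c'' := int C + 1)) ''c'') = Suc C" by simp
      show "\<forall>x\<in>W. \<forall>b\<in>{1..<nat (((fst r)(''c'' := int C + 1)) ''c'')}. snd r' x (int b) = F x b"
        unfolding nc using S Iu(5) unfolding r'_def by (auto simp: less_Suc_eq)
    qed
    moreover have "\<mu> (snd (lf ?B r)) < \<mu> r" unfolding \<mu>_def ev(1) using C by simp
    moreover have "fst (lf ?B r) \<le> k + 2" using ev(2) S by simp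
    ultimately show "fst (lf ?B r) \<le> k + 2 \<and> I (snd (lf ?B r)) \<and> \<mu> (snd (lf ?B r)) < \<mu> r" by blast
  qed
  then obtain t s' where w: "exec (While (Less (V ''c'') (Plus (V ''n'') (N 1))) ?B) s1 t s'" "t \<le> (k+2+1) * \<mu> s1 + 1" "I s'" "\<not> bval (Less (V ''c'') (Plus (V ''n'') (N 1))) s'"
    by blast
  have ex: "exec (forL B0) s (1 + t + 1) s'" unfolding forL_def using exec.Seq[OF e1 w(1)] .
  have "\<mu> s1 = n" unfolding \<mu>_def s1_def by auto
  then have tb: "1 + t + 1 \<le> (k+3) * n + 3" using w(2) by (simp add: algebra_simps)
  have Iu: "fst s' ''n'' = int n" "1 \<le> fst s' ''c''" "fst s' ''c'' \<le> int n + 1"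
      "\<forall>x. x \<notin> W \<longrightarrow> snd s' x = snd s x"
      "\<forall>x\<in>W. \<forall>b\<in>{1..<nat (fst s' ''c'')}. snd s' x (int b) = F x b"
      using w(3) unfolding I_def by blast+
  have "{1..<nat (fst s' ''c'')} = {1..n}" using Iu(1,2,3) w(4) by auto
  then have fin: "\<forall>x\<in>W. \<forall>b\<in>{1..n}. snd s' x (int b) = F x b" using Iu(5) by simp
  show ?thesis by (rule exI[of _ "1 + t + 1"], rule exI[of _ s'], intro conjI) (fact ex tb Iu(1) Iu(4) fin)+
qed




definition Bcopy :: com where "Bcopy = ASet ''a'' (V ''c'') (Get ''in'' (V ''c''))"
definition Bmid :: com where
  "Bmid = Seq (ASet ''ne'' (V ''c'') (Get ''f'' (V ''c'')))
     (Seq (ASet ''se'' (V ''c'') (Get ''g'' (V ''c'')))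
          (ASet ''a'' (V ''c'') (Get ''in'' (Minus (Plus (V ''n'') (N 1)) (V ''c'')))))"
definition Bfin :: com where
  "Bfin = If (Eq (Get ''ne'' (V ''c'')) (N 1)) (ASet ''out'' (V ''c'') (N 1))
     (If (Eq (Get ''f'' (Minus (Plus (V ''n'') (N 1)) (V ''c''))) (N 1)) (ASet ''out'' (V ''c'') (N 2))
     (If (Eq (Get ''g'' (Minus (Plus (V ''n'') (N 1)) (V ''c''))) (N 1)) (ASet ''out'' (V ''c'') (N 3))
     (If (Eq (Get ''se'' (V ''c'')) (N 1)) (ASet ''out'' (V ''c'') (N 4)) (ASet ''out'' (V ''c'') (N 0)))))"

definition PROG :: com where
  "PROG = Seq (forL Bcopy) (Seq FRAG (Seq (forL Bmid) (Seq FRAG (forL Bfin))))"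

definition chainv :: "state \<Rightarrow> int \<Rightarrow> int \<Rightarrow> int" where
  "chainv s m C = (if snd s ''ne'' C = 1 then 1 else if snd s ''f'' (m + 1 - C) = 1 then 2
     else if snd s ''g'' (m + 1 - C) = 1 then 3 else if snd s ''se'' C = 1 then 4 else 0)"

lemma copy_ok:
  fixes s :: state assumes n: "fst s ''n'' = int n"
  shows "\<exists>t s'. exec (forL Bcopy) s t s' \<and> t \<le> (1+3) * n + 3 \<and> fst s' ''n'' = int n
    \<and> (\<forall>x. x \<notin> {''a''} \<longrightarrow> snd s' x = snd s x) \<and> (\<forall>x\<in>{''a''}. \<forall>b\<in>{1..n}. snd s' x (int b) = snd s ''in'' (int b))"
  by (rule for_loop[OF _ n]) (auto simp: Bcopy_def)

lemma mid_ok: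
  fixes s :: state assumes n: "fst s ''n'' = int n"
  shows "\<exists>t s'. exec (forL Bmid) s t s' \<and> t \<le> (5+3) * n + 3 \<and> fst s' ''n'' = int n
    \<and> (\<forall>x. x \<notin> {''ne'',''se'',''a''} \<longrightarrow> snd s' x = snd s x)
    \<and> (\<forall>x\<in>{''ne'',''se'',''a''}. \<forall>b\<in>{1..n}. snd s' x (int b) =
        (if x = ''ne'' then snd s ''f'' (int b) else if x = ''se'' then snd s ''g'' (int b) else snd s ''in'' (int n + 1 - int b)))"
  by (rule for_loop[OF _ n]) (auto simp: Bmid_def Let_def)

lemma fin_ok:
  fixes s :: state assumes n: "fst s ''n'' = int n"
  shows "\<exists>t s'. exec (forL Bfin) s t s' \<and> t \<le> (5+3) * n + 3 \<and> fst s' ''n'' = int n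
    \<and> (\<forall>x. x \<notin> {''out''} \<longrightarrow> snd s' x = snd s x)
    \<and> (\<forall>x\<in>{''out''}. \<forall>b\<in>{1..n}. snd s' x (int b) = chainv s (int n) (int b))"
  by (rule for_loop[OF _ n]) (auto simp: Bfin_def Let_def chainv_def)




lemma main_run:
  fixes s :: state
  assumes perm: "\<sigma> permutes {1..n}" and inp: "input_ok n \<sigma> s"
  shows "\<exists>t s'. exec PROG s t s' \<and> t \<le> 200 * n + 200 \<and> output_ok n \<sigma> s'"
proof -
  have n: "fst s ''n'' = int n" and inv: "\<forall>i\<in>{1..n}. snd s ''in'' (int i) = int (\<sigma> i)"
    using inp unfolding input_ok_def by auto
  have inj: "inj_on \<sigma> {1..n}" using perm by (meson permutes_inj_on)
  have rg: "\<sigma> ` {1..n} \<subseteq> {1..n}" using perm by (simp add: permutes_image)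
  define \<tau> where "\<tau> = (\<lambda>i. \<sigma> (n + 1 - i))"
  have inj2: "inj_on \<tau> {1..n}"
  proof (rule inj_onI)
    fix x y assume xy: "x \<in> {1..n}" "y \<in> {1..n}" "\<tau> x = \<tau> y"
    have "n + 1 - x \<in> {1..n}" "n + 1 - y \<in> {1..n}" using xy by auto
    then have "n + 1 - x = n + 1 - y" using inj xy(3) unfolding \<tau>_def by (meson inj_onD)
    then show "x = y" using xy by auto
  qed
  have rg2: "\<tau> ` {1..n} \<subseteq> {1..n}"
  proof
    fix y assume "y \<in> \<tau> ` {1..n}"
    then obtain x where x: "x \<in> {1..n}" "y = \<sigma> (n + 1 - x)" unfolding \<tau>_def by auto
    then have "n + 1 - x \<in> {1..n}" by auto
    then show "y \<in> {1..n}" using rg x by (metis image_subset_iff)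
  qed
  obtain t1 s1 where 1: "exec (forL Bcopy) s t1 s1" "t1 \<le> (1+3) * n + 3" "fst s1 ''n'' = int n"
    "\<forall>x. x \<notin> {''a''} \<longrightarrow> snd s1 x = snd s x" "\<forall>x\<in>{''a''}. \<forall>b\<in>{1..n}. snd s1 x (int b) = snd s ''in'' (int b)"
    using copy_ok[OF n] by (elim exE conjE) (rule that; assumption)
  have a1: "\<forall>i\<in>{1..n}. snd s1 ''a'' (int i) = int (\<sigma> i)" using 1(5) inv by auto
  obtain t2 s2 where 2: "exec FRAG s1 t2 s2" "t2 \<le> 38 * n + 80" "fst s2 ''n'' = int n"
    "\<forall>x. x \<notin> {''nx'',''pv'',''mm'',''qq'',''f'',''g''} \<longrightarrow> snd s2 x = snd s1 x"
    "\<forall>b\<in>{1..n}. snd s2 ''f'' (int b) = code01 (is_NE n \<sigma> b) \<and> snd s2 ''g'' (int b) = code01 (is_SE n \<sigma> b)"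
    using FRAG_ok[OF 1(3) a1 inj rg] by (elim exE conjE) (rule that; assumption)
  obtain t3 s3 where 3: "exec (forL Bmid) s2 t3 s3" "t3 \<le> (5+3) * n + 3" "fst s3 ''n'' = int n"
    "\<forall>x. x \<notin> {''ne'',''se'',''a''} \<longrightarrow> snd s3 x = snd s2 x"
    "\<forall>x\<in>{''ne'',''se'',''a''}. \<forall>b\<in>{1..n}. snd s3 x (int b) =
        (if x = ''ne'' then snd s2 ''f'' (int b) else if x = ''se'' then snd s2 ''g'' (int b) else snd s2 ''in'' (int n + 1 - int b))"
    using mid_ok[OF 2(3)] by (elim exE conjE) (rule that; assumption)
  have a3: "\<forall>i\<in>{1..n}. snd s3 ''a'' (int i) = int (\<tau> i)"
  proof
    fix i assume i: "i \<in> {1..n}"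
    then have "snd s3 ''a'' (int i) = snd s2 ''in'' (int n + 1 - int i)" using 3(5) by auto
    also have "\<dots> = snd s ''in'' (int (n + 1 - i))" using 2(4) 1(4) i by (simp add: of_nat_diff add.commute)
    also have "\<dots> = int (\<tau> i)"
    proof -
      have "n + 1 - i \<in> {1..n}" using i by auto
      then show ?thesis unfolding \<tau>_def using inv by blast
    qed
    finally show "snd s3 ''a'' (int i) = int (\<tau> i)" .
  qed
  obtain t4 s4 where 4: "exec FRAG s3 t4 s4" "t4 \<le> 38 * n + 80" "fst s4 ''n'' = int n"
    "\<forall>x. x \<notin> {''nx'',''pv'',''mm'',''qq'',''f'',''g''} \<longrightarrow> snd s4 x = snd s3 x"
    "\<forall>b\<in>{1..n}. snd s4 ''f'' (int b) = code01 (is_NE n \<tau> b) \<and> snd s4 ''g'' (int b) = code01 (is_SE n \<tau> b)"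
    using FRAG_ok[OF 3(3) a3 inj2 rg2] by (elim exE conjE) (rule that; assumption)
  obtain t5 s5 where 5: "exec (forL Bfin) s4 t5 s5" "t5 \<le> (5+3) * n + 3" "fst s5 ''n'' = int n"
    "\<forall>x. x \<notin> {''out''} \<longrightarrow> snd s5 x = snd s4 x"
    "\<forall>x\<in>{''out''}. \<forall>b\<in>{1..n}. snd s5 x (int b) = chainv s4 (int n) (int b)"
    using fin_ok[OF 4(3)] by (elim exE conjE) (rule that; assumption)
  have ex: "exec PROG s (t1 + (t2 + (t3 + (t4 + t5 + 1) + 1) + 1) + 1) s5" unfolding PROG_def
    using exec.Seq[OF 1(1) exec.Seq[OF 2(1) exec.Seq[OF 3(1) exec.Seq[OF 4(1) 5(1)]]]] .
  have tb: "t1 + (t2 + (t3 + (t4 + t5 + 1) + 1) + 1) + 1 \<le> 200 * n + 200"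
    using 1(2) 2(2) 3(2) 4(2) 5(2) by simp
  have out: "output_ok n \<sigma> s5" unfolding output_ok_def
  proof
    fix i assume i: "i \<in> {1..n}"
    let ?j = "n + 1 - i"
    have j: "?j \<in> {1..n}" using i by auto
    have ij: "int n + 1 - int i = int ?j" using i by (simp add: of_nat_diff)
    have ne: "snd s4 ''ne'' (int i) = code01 (is_NE n \<sigma> i)" using 4(4) 3(5) 2(5) i by auto
    have se: "snd s4 ''se'' (int i) = code01 (is_SE n \<sigma> i)" using 4(4) 3(5) 2(5) i by auto
    have nw: "snd s4 ''f'' (int n + 1 - int i) = code01 (is_NW n \<sigma> i)"
      unfolding ij using 4(5) j NW_mirror[OF i, of \<sigma>] unfolding \<tau>_def by auto
    have sw: "snd s4 ''g'' (int n + 1 - int i) = code01 (is_SW n \<sigma> i)"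
      unfolding ij using 4(5) j SW_mirror[OF i, of \<sigma>] unfolding \<tau>_def by auto
    have "snd s5 ''out'' (int i) = chainv s4 (int n) (int i)" using 5(5) i by auto
    also have "\<dots> = etype_code (elem_type n \<sigma> i)"
      unfolding chainv_def ne se nw sw elem_type_def code01_def by auto
    finally show "snd s5 ''out'' (int i) = etype_code (elem_type n \<sigma> i)" .
  qed
  show ?thesis by (rule exI[of _ "t1 + (t2 + (t3 + (t4 + t5 + 1) + 1) + 1) + 1"], rule exI[of _ s5], intro conjI) (fact ex tb out)+
qed

theorem lemma2:
  "\<exists>prog :: com. \<exists>C :: nat.
     \<forall>n \<sigma> s. \<sigma> permutes {1..n} \<and> skew_merged n \<sigma> \<and> input_ok n \<sigma> s \<longrightarrow>
       (\<exists>t s'. exec prog s t s' \<and> t \<le> C * n + C \<and> output_ok n \<sigma> s')"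
  using main_run by blast


end
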